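(* Neither $\sim_{hpb}\subseteq\sim_{\mathrm{t}\mu}$ nor $\sim_{\mathrm{t}\mu}\subseteq\sim_{hpb}$: there exist systems $\mathfrak T_1,\mathfrak T_2$ with $\mathfrak T_1\sim_{hpb}\mathfrak T_2$ but $\mathfrak T_1\not\sim_{\mathrm{t}\mu}\mathfrak T_2$, and there exist systems $\mathfrak T_3,\mathfrak T_4$ with $\mathfrak T_3\sim_{\mathrm{t}\mu}\mathfrak T_4$ but $\mathfrak T_3\not\sim_{hpb}\mathfrak T_4$.
   Context: A system (TSI) is $\mathfrak T=(S,s_0,T,I,\Sigma)$ with states $S$, initial $s_0$, labels $\Sigma$, transitions $T\subseteq S\times\Sigma\times S$, irreflexive symmetric independence $I\subseteq T\times T$ satisfying: with $(s,a,s_1)\prec(s_2,a,q)$ iff $\exists b$: $(s,a,s_1)I(s,b,s_2)$, $(s,a,s_1)I(s_1,b,q)$, $(s,b,s_2)I(s_2,a,q)$ and $\sim$ its equivalence closure, (A1) $(s,a,s_1)\sim(s,a,s_2)\Rightarrow s_1=s_2$; (A2) $(s,a,s_1)I(s,b,s_2)\Rightarrow\exists q.\,(s,a,s_1)I(s_1,b,q)\wedge(s,b,s_2)I(s_2,a,q)$; (A3) $(s,a,s_1)I(s_1,b,q)\Rightarrow\exists s_2.\,(s,a,s_1)I(s,b,s_2)\wedge(s,b,s_2)I(s_2,a,q)$; (A4) $t\sim t'\Rightarrow\{u:tIu\}=\{u:t'Iu\}$; systems are image-finite. For $t=(s,a,s')$: $\sigma(t)=s,\tau(t)=s',\delta(t)=a$.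 Relations: $t\otimes t'$ iff $\sigma(t)=\sigma(t')\wedge tIt'$; $t\ominus t'$ iff $\tau(t)=\sigma(t')\wedge tIt'$; $t\le t'$ iff $\tau(t)=\sigma(t')\wedge\neg tIt'$. Processes: $\mathfrak X(s)$ = transitions with source $s$; conflict-free set = set of transitions with common source, pairwise $\otimes$; support sets = the $\mathfrak X(s)$ and non-empty conflict-free sets; $M\sqsubseteq R$ iff $M\subseteq R$ and no $t\in R\setminus M$ has $t\otimes t'$ for all $t'\in M$; $\mathcal X$ = all $\mathfrak X(s)$ and all support sets $M\sqsubseteq\mathfrak X(s)$; $\mathfrak A=T\cup\{t_\epsilon\}$ with fresh $t_\epsilon$, $\tau(t_\epsilon)=s_0$, $t_\epsilon\le t$ whenever $\sigma(t)=s_0$, never $t_\epsilon\ominus t$; $\mathfrak S=\mathcal X\times\mathfrak A$, initial process $(\mathfrak X(s_0),t_\epsilon)$. Trace modal mu-calculus equivalence $\sim_{\mathrm{t}\mu}$: systems are equivalent iff their initial processes satisfy the same closed fixpoint-free formulas $\phi::=\mathrm{tt}\mid\neg\phi\mid\phi\wedge\phi\mid\langle a\rangle\phi\mid\langle\otimes\rangle\phi$ with $[\![\langle a\rangle\phi]\!]=\{(R,t):\exists r\in R.\ \delta(r)=a,\ (t\le r\text{ or }t\ominus r),\ (\mathfrak X(\tau(r)),r)\in[\![\phi]\!]\}$, $[\![\langle\otimes\rangle\phi]\!]=\{(R,t):\exists M\in\mathcal X.\ M\sqsubseteq R,\ (M,t)\in[\![\phi]\!]\}$, and boolean connectives interpreted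 as usual in $\mathfrak S$. $\sim_{hpb}$: runs are finite sequences $[t_1,\dots,t_k]$ with $\sigma(t_1)=s_0$, $\sigma(t_{i+1})=\tau(t_i)$; $\varrho(\pi)$ is the last transition (empty run $\epsilon$ ends at $s_0$; its "last transition" is independent of nothing). The labelled poset of a run: elements $1..k$ labelled $\delta(t_i)$, order the reflexive-transitive closure of $\{(i,j):i<j,\neg t_iIt_j\}$. $(\pi_1.u,\pi_2.v)$ is synchronous iff $(\varrho(\pi_1),u)\in I_1\Leftrightarrow(\varrho(\pi_2),v)\in I_2$ and the labelled posets of $\pi_1.u,\pi_2.v$ are isomorphic. hpb game from $(\epsilon,\epsilon)$: Adam picks a system and a transition $u$ from the end state of the current run there; Eve answers with an equally labelled transition $v$ from the end state of the current run in the other system so that the extended pair is synchronous; a player unable to move loses; infinite plays are won by Eve. $\mathfrak T_1\sim_{hpb}\mathfrak T_2$ iff Eve has a winning strategy. *)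

theory Defs
  imports Main
begin

section \<open>Transition systems with independence (TSI)\<close>

type_synonym ('s, 'l) trans = "'s \<times> 'l \<times> 's"

record ('s, 'l) tsi =
  St   :: "'s set"
  init :: 's
  Lab  :: "'l set"
  Tr   :: "('s, 'l) trans set"
  Ind  :: "(('s, 'l) trans \<times> ('s, 'l) trans) set"

definition src :: "('s, 'l) trans \<Rightarrow> 's" where "src t = fst t"
definition tgt :: "('s, 'l) trans \<Rightarrow> 's" where "tgt t = snd (snd t)"
definition lab :: "('s, 'l) trans \<Rightarrow> 'l" where "lab t = fst (snd t)"

definition prec :: "('s, 'l, 'x) tsi_scheme \<Rightarrow> ('s, 'l) trans \<Rightarrow> ('s, 'l) trans \<Rightarrow> bool" where
  "prec T t u \<longleftrightarrow> (\<exists>s a s1 s2 q b. t = (s, a, s1) \<and> u = (s2, a, q) \<and>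
      (t, (s, b, s2)) \<in> Ind T \<and> (t, (s1, b, q)) \<in> Ind T \<and> ((s, b, s2), (s2, a, q)) \<in> Ind T)"

definition simT :: "('s, 'l, 'x) tsi_scheme \<Rightarrow> (('s, 'l) trans \<times> ('s, 'l) trans) set" where
  "simT T = ({(t, u). prec T t u} \<union> {(t, u). prec T u t})\<^sup>*"

definition is_tsi :: "('s, 'l, 'x) tsi_scheme \<Rightarrow> bool" where
  "is_tsi T \<longleftrightarrow>
     init T \<in> St T \<and>
     Tr T \<subseteq> St T \<times> Lab T \<times> St T \<and>
     Ind T \<subseteq> Tr T \<times> Tr T \<and>
     irrefl (Ind T) \<and> sym (Ind T) \<and>
     \<comment> \<open>(A1)\<close>
     (\<forall>s a s1 s2. ((s, a, s1), (s, a, s2)) \<in> simT T \<longrightarrow> s1 = s2) \<and>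
     \<comment> \<open>(A2)\<close>
     (\<forall>s a s1 b s2. ((s, a, s1), (s, b, s2)) \<in> Ind T \<longrightarrow>
        (\<exists>q. ((s, a, s1), (s1, b, q)) \<in> Ind T \<and> ((s, b, s2), (s2, a, q)) \<in> Ind T)) \<and>
     \<comment> \<open>(A3)\<close>
     (\<forall>s a s1 b q. ((s, a, s1), (s1, b, q)) \<in> Ind T \<longrightarrow>
        (\<exists>s2. ((s, a, s1), (s, b, s2)) \<in> Ind T \<and> ((s, b, s2), (s2, a, q)) \<in> Ind T)) \<and>
     \<comment> \<open>(A4)\<close>
     (\<forall>t t'. (t, t') \<in> simT T \<longrightarrow> {u. (t, u) \<in> Ind T} = {u. (t', u) \<in> Ind T}) \<and>
     \<comment> \<open>image-finiteness\<close>
     (\<forall>s. finite {t \<in> Tr T. src t = s})"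

definition Xs :: "('s, 'l, 'x) tsi_scheme \<Rightarrow> 's \<Rightarrow> ('s, 'l) trans set" where
  "Xs T s = {t \<in> Tr T. src t = s}"

definition otimes :: "('s, 'l, 'x) tsi_scheme \<Rightarrow> ('s, 'l) trans \<Rightarrow> ('s, 'l) trans \<Rightarrow> bool" where
  "otimes T t t' \<longleftrightarrow> src t = src t' \<and> (t, t') \<in> Ind T"

definition ominus :: "('s, 'l, 'x) tsi_scheme \<Rightarrow> ('s, 'l) trans \<Rightarrow> ('s, 'l) trans \<Rightarrow> bool" where
  "ominus T t t' \<longleftrightarrow> tgt t = src t' \<and> (t, t') \<in> Ind T"

definition leT :: "('s, 'l, 'x) tsi_scheme \<Rightarrow> ('s, 'l) trans \<Rightarrow> ('s, 'l) trans \<Rightarrow> bool" where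
  "leT T t t' \<longleftrightarrow> tgt t = src t' \<and> (t, t') \<notin> Ind T"

definition conflict_free :: "('s, 'l, 'x) tsi_scheme \<Rightarrow> ('s, 'l) trans set \<Rightarrow> bool" where
  "conflict_free T M \<longleftrightarrow> M \<subseteq> Tr T \<and> (\<exists>s. \<forall>t\<in>M. src t = s) \<and>
     (\<forall>t\<in>M. \<forall>t'\<in>M. t \<noteq> t' \<longrightarrow> otimes T t t')"

definition support :: "('s, 'l, 'x) tsi_scheme \<Rightarrow> ('s, 'l) trans set \<Rightarrow> bool" where
  "support T M \<longleftrightarrow> (\<exists>s\<in>St T. M = Xs T s) \<or> (M \<noteq> {} \<and> conflict_free T M)"

definition sqsub :: "('s, 'l, 'x) tsi_scheme \<Rightarrow> ('s, 'l) trans set \<Rightarrow> ('s, 'l) trans set \<Rightarrow> bool" where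
  "sqsub T M R \<longleftrightarrow> M \<subseteq> R \<and> \<not> (\<exists>t \<in> R - M. \<forall>t'\<in>M. otimes T t t')"

definition Xcal :: "('s, 'l, 'x) tsi_scheme \<Rightarrow> ('s, 'l) trans set set" where
  "Xcal T = {Xs T s | s. s \<in> St T} \<union> {M. support T M \<and> (\<exists>s\<in>St T. sqsub T M (Xs T s))}"

text \<open>Elements of \<open>\<A> = T \<union> {t_\<epsilon>}\<close>: \<open>None\<close> stands for the fresh \<open>t_\<epsilon>\<close>
  with \<open>\<tau>(t_\<epsilon>) = s\<^sub>0\<close>, \<open>t_\<epsilon> \<le> t\<close> iff \<open>\<sigma>(t) = s\<^sub>0\<close>, and never \<open>t_\<epsilon> \<ominus> t\<close>.\<close>
definition leA :: "('s, 'l, 'x) tsi_scheme \<Rightarrow> ('s, 'l) trans option \<Rightarrow> ('s, 'l) trans \<Rightarrow> bool" where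
  "leA T a r = (case a of None \<Rightarrow> src r = init T | Some t \<Rightarrow> leT T t r)"

definition ominusA :: "('s, 'l, 'x) tsi_scheme \<Rightarrow> ('s, 'l) trans option \<Rightarrow> ('s, 'l) trans \<Rightarrow> bool" where
  "ominusA T a r = (case a of None \<Rightarrow> False | Some t \<Rightarrow> ominus T t r)"

section \<open>Trace modal logic (fixpoint-free fragment)\<close>

datatype 'l form = TT | Neg "'l form" | Conj "'l form" "'l form" | Dia 'l "'l form" | DiaOt "'l form"

fun sat :: "('s, 'l, 'x) tsi_scheme \<Rightarrow> ('s, 'l) trans set \<Rightarrow> ('s, 'l) trans option \<Rightarrow> 'l form \<Rightarrow> bool" where
  "sat T R t TT = True"
| "sat T R t (Neg \<phi>) = (\<not> sat T R t \<phi>)"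
| "sat T R t (Conj \<phi> \<psi>) = (sat T R t \<phi> \<and> sat T R t \<psi>)"
| "sat T R t (Dia a \<phi>) = (\<exists>r\<in>R. lab r = a \<and> (leA T t r \<or> ominusA T t r) \<and>
                              sat T (Xs T (tgt r)) (Some r) \<phi>)"
| "sat T R t (DiaOt \<phi>) = (\<exists>M\<in>Xcal T. sqsub T M R \<and> sat T M t \<phi>)"

definition tmu_equiv :: "('s1, 'l, 'x) tsi_scheme \<Rightarrow> ('s2, 'l, 'y) tsi_scheme \<Rightarrow> bool" where
  "tmu_equiv T1 T2 \<longleftrightarrow>
     (\<forall>\<phi>. sat T1 (Xs T1 (init T1)) None \<phi> \<longleftrightarrow> sat T2 (Xs T2 (init T2)) None \<phi>)"

section \<open>History-preserving bisimulation game\<close>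

definition end_state :: "('s, 'l, 'x) tsi_scheme \<Rightarrow> ('s, 'l) trans list \<Rightarrow> 's" where
  "end_state T \<pi> = (if \<pi> = [] then init T else tgt (last \<pi>))"

text \<open>\<open>(\<rho>(\<pi>), u) \<in> I\<close>; the empty run's last transition is independent of nothing.\<close>
definition last_indep :: "('s, 'l, 'x) tsi_scheme \<Rightarrow> ('s, 'l) trans list \<Rightarrow> ('s, 'l) trans \<Rightarrow> bool" where
  "last_indep T \<pi> u \<longleftrightarrow> \<pi> \<noteq> [] \<and> (last \<pi>, u) \<in> Ind T"

text \<open>Order of the labelled poset of a run (positions indexed from 0).\<close>
definition run_ord :: "('s, 'l, 'x) tsi_scheme \<Rightarrow> ('s, 'l) trans list \<Rightarrow> (nat \<times> nat) set" where
  "run_ord T \<pi> = {(i, j). i < j \<and> j < length \<pi> \<and> (\<pi> ! i, \<pi> ! j) \<notin> Ind T}\<^sup>*"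

definition lposet_iso :: "('s1, 'l, 'x) tsi_scheme \<Rightarrow> ('s1, 'l) trans list \<Rightarrow>
                          ('s2, 'l, 'y) tsi_scheme \<Rightarrow> ('s2, 'l) trans list \<Rightarrow> bool" where
  "lposet_iso T1 \<pi>1 T2 \<pi>2 \<longleftrightarrow> length \<pi>1 = length \<pi>2 \<and>
     (\<exists>f. bij_betw f {..<length \<pi>1} {..<length \<pi>2} \<and>
          (\<forall>i < length \<pi>1. lab (\<pi>2 ! f i) = lab (\<pi>1 ! i)) \<and>
          (\<forall>i < length \<pi>1. \<forall>j < length \<pi>1. (i, j) \<in> run_ord T1 \<pi>1 \<longleftrightarrow> (f i, f j) \<in> run_ord T2 \<pi>2))"

definition synchronous :: "('s1, 'l, 'x) tsi_scheme \<Rightarrow> ('s2, 'l, 'y) tsi_scheme \<Rightarrow>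
    ('s1, 'l) trans list \<Rightarrow> ('s1, 'l) trans \<Rightarrow> ('s2, 'l) trans list \<Rightarrow> ('s2, 'l) trans \<Rightarrow> bool" where
  "synchronous T1 T2 \<pi>1 u \<pi>2 v \<longleftrightarrow>
     (last_indep T1 \<pi>1 u \<longleftrightarrow> last_indep T2 \<pi>2 v) \<and> lposet_iso T1 (\<pi>1 @ [u]) T2 (\<pi>2 @ [v])"

text \<open>Eve wins the hpb game from position \<open>(\<pi>1, \<pi>2)\<close>: a safety game (infinite plays are won
  by Eve), so the winning region is the greatest fixpoint: for every move of Adam in either
  system, Eve has an equally labelled synchronous answer leading to a winning position.\<close>
coinductive eve_wins :: "('s1, 'l, 'x) tsi_scheme \<Rightarrow> ('s2, 'l, 'y) tsi_scheme \<Rightarrow>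
    ('s1, 'l) trans list \<Rightarrow> ('s2, 'l) trans list \<Rightarrow> bool" for T1 T2 where
  "\<lbrakk> \<forall>u \<in> Tr T1. src u = end_state T1 \<pi>1 \<longrightarrow>
        (\<exists>v \<in> Tr T2. src v = end_state T2 \<pi>2 \<and> lab v = lab u \<and>
           synchronous T1 T2 \<pi>1 u \<pi>2 v \<and> eve_wins T1 T2 (\<pi>1 @ [u]) (\<pi>2 @ [v]));
     \<forall>v \<in> Tr T2. src v = end_state T2 \<pi>2 \<longrightarrow>
        (\<exists>u \<in> Tr T1. src u = end_state T1 \<pi>1 \<and> lab u = lab v \<and>
           synchronous T1 T2 \<pi>1 u \<pi>2 v \<and> eve_wins T1 T2 (\<pi>1 @ [u]) (\<pi>2 @ [v])) \<rbrakk>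
   \<Longrightarrow> eve_wins T1 T2 \<pi>1 \<pi>2"

definition hpb :: "('s1, 'l, 'x) tsi_scheme \<Rightarrow> ('s2, 'l, 'y) tsi_scheme \<Rightarrow> bool" where
  "hpb T1 T2 \<longleftrightarrow> eve_wins T1 T2 [] []"

end

theory Submission
  imports Defs
begin

lemma rtrancl_Id_un: assumes "r O r \<subseteq> Id" shows "r\<^sup>* = Id \<union> r"
proof
  show "r\<^sup>* \<subseteq> Id \<union> r"
  proof
    fix p assume "p \<in> r\<^sup>*"
    then obtain x z where p: "p = (x,z)" and "(x,z) \<in> r\<^sup>*" by (cases p) auto
    from this(2) have "(x,z) \<in> Id \<union> r"
    proof (induction rule: rtrancl_induct)
      case base then show ?case by auto
    next
      case (step y z)
      then show ?case using assms by blast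
    qed
    then show "p \<in> Id \<union> r" using p by simp
  qed
qed auto

definition sqInd :: "(('s,'l) trans \<Rightarrow> nat) \<Rightarrow> (('s,'l) trans \<times> ('s,'l) trans) set" where
  "sqInd f = {(t,u). f t = f u \<and> f t \<noteq> 0 \<and> lab t \<noteq> lab u}"

lemma simT_sub:
  assumes "Ind T = sqInd f"
  shows "simT T \<subseteq> {(t,u). t = u \<or> (f t = f u \<and> f t \<noteq> 0 \<and> lab t = lab u)}"
proof
  let ?S = "{(t,u). t = u \<or> (f t = f u \<and> f t \<noteq> 0 \<and> lab t = lab u)}"
  have p: "prec T t u \<Longrightarrow> f t = f u \<and> f t \<noteq> 0 \<and> lab t = lab u" for t u
    unfolding prec_def assms sqInd_def by (auto simp: lab_def)
  fix p assume "p \<in> simT T"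
  then obtain x z where pz: "p = (x,z)" and "(x,z) \<in> ({(t, u). prec T t u} \<union> {(t, u). prec T u t})\<^sup>*"
    unfolding simT_def by (cases p) auto
  from this(2) have "(x,z) \<in> ?S"
  proof (induction rule: rtrancl_induct)
    case base then show ?case by auto
  next
    case (step y z)
    have "f y = f z \<and> f y \<noteq> 0 \<and> lab y = lab z"
      using step.hyps(2) p[of y z] p[of z y] by auto
    with step.IH show ?case by auto
  qed
  then show "p \<in> ?S" using pz by simp
qed

lemma A4_gen:
  assumes "Ind T = sqInd f"
  shows "\<forall>t t'. (t, t') \<in> simT T \<longrightarrow> {u. (t, u) \<in> Ind T} = {u. (t', u) \<in> Ind T}"
  using simT_sub[OF assms] unfolding assms sqInd_def by fastforce

definition T1sq :: "(nat,nat) trans \<Rightarrow> nat" where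
  "T1sq t = (if t \<in> {(0,0,1),(0,1,3),(1,1,5),(3,0,5)} then 1 else if t \<in> {(0,0,2),(0,1,4),(2,1,5),(4,0,5)} then 2 else 0)"

definition T1 :: "(nat,nat) tsi" where
  "T1 = \<lparr> St = {0..5}, init = 0, Lab = {0,1,2,3},
         Tr = {(0,0,1),(0,0,2),(0,1,3),(0,1,4),(1,1,5),(2,1,5),(3,0,5),(4,0,5),(1,3,5),(3,2,5)},
         Ind = sqInd T1sq \<rparr>"

lemma dom1: "T1sq t \<noteq> 0 \<Longrightarrow> t \<in> {(0,0,1),(0,1,3),(1,1,5),(3,0,5),(0,0,2),(0,1,4),(2,1,5),(4,0,5)}"
  unfolding T1sq_def by (auto split: if_splits)

lemma S8Tr1: "t \<in> {(0,0,1),(0,1,3),(1,1,5),(3,0,5),(0,0,2),(0,1,4),(2,1,5),(4,0,5)} \<Longrightarrow> t \<in> Tr T1"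
  unfolding T1_def by (elim insertE emptyE) simp_all

lemma I1: "(t,u) \<in> Ind T1 \<longleftrightarrow> T1sq t = T1sq u \<and> T1sq t \<noteq> 0 \<and> lab t \<noteq> lab u"
  by (simp add: T1_def sqInd_def)

definition W1 :: "nat \<Rightarrow> nat" where "W1 s1 = (if s1 = 1 then 3 else if s1 = 3 then 1 else if s1 = 2 then 4 else 2)"

lemma tsi_T1: "is_tsi T1"
  unfolding is_tsi_def
proof (intro conjI)
  have I: "Ind T1 = sqInd T1sq" by (simp add: T1_def)
  show "init T1 \<in> St T1" by (simp add: T1_def)
  show "Tr T1 \<subseteq> St T1 \<times> Lab T1 \<times> St T1" by (simp add: T1_def)
  show "Ind T1 \<subseteq> Tr T1 \<times> Tr T1"
  proof
    fix p assume "p \<in> Ind T1"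
    then obtain t u where p: "p = (t,u)" "T1sq t \<noteq> 0" "T1sq u \<noteq> 0" by (cases p) (auto simp: I1)
    then show "p \<in> Tr T1 \<times> Tr T1" using S8Tr1[OF dom1[of t]] S8Tr1[OF dom1[of u]] by simp
  qed
  show "irrefl (Ind T1)" by (simp add: I1 irrefl_def)
  show "sym (Ind T1)" by (auto simp add: I1 sym_def)
  show "\<forall>s a s1 s2. ((s, a, s1), s, a, s2) \<in> simT T1 \<longrightarrow> s1 = s2"
  proof (intro allI impI)
    fix s a s1 s2 assume "((s, a, s1), s, a, s2) \<in> simT T1"
    then have "s1 = s2 \<or> (T1sq (s,a,s1) = T1sq (s,a,s2) \<and> T1sq (s,a,s1) \<noteq> 0)"
      using simT_sub[OF I] by auto
    then show "s1 = s2"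
    proof
      assume h: "T1sq (s,a,s1) = T1sq (s,a,s2) \<and> T1sq (s,a,s1) \<noteq> 0"
      have "(s,a,s1) \<in> {(0,0,1),(0,1,3),(1,1,5),(3,0,5),(0,0,2),(0,1,4),(2,1,5),(4,0,5)}"
        "(s,a,s2) \<in> {(0,0,1),(0,1,3),(1,1,5),(3,0,5),(0,0,2),(0,1,4),(2,1,5),(4,0,5)}"
        using dom1[of "(s,a,s1)"] dom1[of "(s,a,s2)"] h by metis+
      then show ?thesis using h by (elim insertE emptyE) (simp_all add: T1sq_def)
    qed
  qed
  show "\<forall>s a s1 b s2. ((s, a, s1), s, b, s2) \<in> Ind T1 \<longrightarrow>
        (\<exists>q. ((s, a, s1), s1, b, q) \<in> Ind T1 \<and> ((s, b, s2), s2, a, q) \<in> Ind T1)"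
  proof (intro allI impI)
    fix s a s1 b s2 assume "((s, a, s1), s, b, s2) \<in> Ind T1"
    then have h: "T1sq (s,a,s1) = T1sq (s,b,s2)" "T1sq (s,a,s1) \<noteq> 0" "a \<noteq> b" by (auto simp: I1 lab_def)
    have "(s,a,s1) \<in> {(0,0,1),(0,1,3),(1,1,5),(3,0,5),(0,0,2),(0,1,4),(2,1,5),(4,0,5)}"
        "(s,b,s2) \<in> {(0,0,1),(0,1,3),(1,1,5),(3,0,5),(0,0,2),(0,1,4),(2,1,5),(4,0,5)}"
      using dom1[of "(s,a,s1)"] dom1[of "(s,b,s2)"] h by metis+
    then have "((s, a, s1), s1, b, 5) \<in> Ind T1 \<and> ((s, b, s2), s2, a, 5) \<in> Ind T1"
      using h by (elim insertE emptyE) (simp_all add: I1 T1sq_def lab_def)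
    then show "\<exists>q. ((s, a, s1), s1, b, q) \<in> Ind T1 \<and> ((s, b, s2), s2, a, q) \<in> Ind T1" by blast
  qed
  show "\<forall>s a s1 b q. ((s, a, s1), s1, b, q) \<in> Ind T1 \<longrightarrow>
        (\<exists>s2. ((s, a, s1), s, b, s2) \<in> Ind T1 \<and> ((s, b, s2), s2, a, q) \<in> Ind T1)"
  proof (intro allI impI)
    fix s a s1 b q assume "((s, a, s1), s1, b, q) \<in> Ind T1"
    then have h: "T1sq (s,a,s1) = T1sq (s1,b,q)" "T1sq (s,a,s1) \<noteq> 0" "a \<noteq> b" by (auto simp: I1 lab_def)
    have "(s,a,s1) \<in> {(0,0,1),(0,1,3),(1,1,5),(3,0,5),(0,0,2),(0,1,4),(2,1,5),(4,0,5)}"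
        "(s1,b,q) \<in> {(0,0,1),(0,1,3),(1,1,5),(3,0,5),(0,0,2),(0,1,4),(2,1,5),(4,0,5)}"
      using dom1[of "(s,a,s1)"] dom1[of "(s1,b,q)"] h by metis+
    then have "((s, a, s1), s, b, W1 s1) \<in> Ind T1 \<and> ((s, b, W1 s1), W1 s1, a, q) \<in> Ind T1"
      using h by (elim insertE emptyE) (simp_all add: I1 T1sq_def lab_def W1_def)
    then show "\<exists>s2. ((s, a, s1), s, b, s2) \<in> Ind T1 \<and> ((s, b, s2), s2, a, q) \<in> Ind T1" by blast
  qed
  show "\<forall>t t'. (t, t') \<in> simT T1 \<longrightarrow> {u. (t, u) \<in> Ind T1} = {u. (t', u) \<in> Ind T1}"
    by (rule A4_gen[OF I])
  show "\<forall>s. finite {t \<in> Tr T1. src t = s}" by (simp add: T1_def)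
qed

definition T2sq :: "(nat,nat) trans \<Rightarrow> nat" where
  "T2sq t = (if t \<in> {(0,0,1),(0,1,4),(1,1,5),(4,0,5)} then 1 else if t \<in> {(0,0,2),(0,1,3),(2,1,5),(3,0,5)} then 2 else 0)"

definition T2 :: "(nat,nat) tsi" where
  "T2 = \<lparr> St = {0..5}, init = 0, Lab = {0,1,2,3},
         Tr = {(0,0,1),(0,0,2),(0,1,3),(0,1,4),(1,1,5),(2,1,5),(3,0,5),(4,0,5),(1,3,5),(3,2,5)},
         Ind = sqInd T2sq \<rparr>"

lemma dom2: "T2sq t \<noteq> 0 \<Longrightarrow> t \<in> {(0,0,1),(0,1,3),(1,1,5),(3,0,5),(0,0,2),(0,1,4),(2,1,5),(4,0,5)}"
  unfolding T2sq_def by (auto split: if_splits)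

lemma S8Tr2: "t \<in> {(0,0,1),(0,1,3),(1,1,5),(3,0,5),(0,0,2),(0,1,4),(2,1,5),(4,0,5)} \<Longrightarrow> t \<in> Tr T2"
  unfolding T2_def by (elim insertE emptyE) simp_all

lemma I2: "(t,u) \<in> Ind T2 \<longleftrightarrow> T2sq t = T2sq u \<and> T2sq t \<noteq> 0 \<and> lab t \<noteq> lab u"
  by (simp add: T2_def sqInd_def)

definition W2 :: "nat \<Rightarrow> nat" where "W2 s1 = (if s1 = 1 then 4 else if s1 = 4 then 1 else if s1 = 2 then 3 else 2)"

lemma tsi_T2: "is_tsi T2"
  unfolding is_tsi_def
proof (intro conjI)
  have I: "Ind T2 = sqInd T2sq" by (simp add: T2_def)
  show "init T2 \<in> St T2" by (simp add: T2_def)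
  show "Tr T2 \<subseteq> St T2 \<times> Lab T2 \<times> St T2" by (simp add: T2_def)
  show "Ind T2 \<subseteq> Tr T2 \<times> Tr T2"
  proof
    fix p assume "p \<in> Ind T2"
    then obtain t u where p: "p = (t,u)" "T2sq t \<noteq> 0" "T2sq u \<noteq> 0" by (cases p) (auto simp: I2)
    then show "p \<in> Tr T2 \<times> Tr T2" using S8Tr2[OF dom2[of t]] S8Tr2[OF dom2[of u]] by simp
  qed
  show "irrefl (Ind T2)" by (simp add: I2 irrefl_def)
  show "sym (Ind T2)" by (auto simp add: I2 sym_def)
  show "\<forall>s a s1 s2. ((s, a, s1), s, a, s2) \<in> simT T2 \<longrightarrow> s1 = s2"
  proof (intro allI impI)
    fix s a s1 s2 assume "((s, a, s1), s, a, s2) \<in> simT T2"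
    then have "s1 = s2 \<or> (T2sq (s,a,s1) = T2sq (s,a,s2) \<and> T2sq (s,a,s1) \<noteq> 0)"
      using simT_sub[OF I] by auto
    then show "s1 = s2"
    proof
      assume h: "T2sq (s,a,s1) = T2sq (s,a,s2) \<and> T2sq (s,a,s1) \<noteq> 0"
      have "(s,a,s1) \<in> {(0,0,1),(0,1,3),(1,1,5),(3,0,5),(0,0,2),(0,1,4),(2,1,5),(4,0,5)}"
        "(s,a,s2) \<in> {(0,0,1),(0,1,3),(1,1,5),(3,0,5),(0,0,2),(0,1,4),(2,1,5),(4,0,5)}"
        using dom2[of "(s,a,s1)"] dom2[of "(s,a,s2)"] h by metis+
      then show ?thesis using h by (elim insertE emptyE) (simp_all add: T2sq_def)
    qed
  qed
  show "\<forall>s a s1 b s2. ((s, a, s1), s, b, s2) \<in> Ind T2 \<longrightarrow>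
        (\<exists>q. ((s, a, s1), s1, b, q) \<in> Ind T2 \<and> ((s, b, s2), s2, a, q) \<in> Ind T2)"
  proof (intro allI impI)
    fix s a s1 b s2 assume "((s, a, s1), s, b, s2) \<in> Ind T2"
    then have h: "T2sq (s,a,s1) = T2sq (s,b,s2)" "T2sq (s,a,s1) \<noteq> 0" "a \<noteq> b" by (auto simp: I2 lab_def)
    have "(s,a,s1) \<in> {(0,0,1),(0,1,3),(1,1,5),(3,0,5),(0,0,2),(0,1,4),(2,1,5),(4,0,5)}"
        "(s,b,s2) \<in> {(0,0,1),(0,1,3),(1,1,5),(3,0,5),(0,0,2),(0,1,4),(2,1,5),(4,0,5)}"
      using dom2[of "(s,a,s1)"] dom2[of "(s,b,s2)"] h by metis+
    then have "((s, a, s1), s1, b, 5) \<in> Ind T2 \<and> ((s, b, s2), s2, a, 5) \<in> Ind T2"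
      using h by (elim insertE emptyE) (simp_all add: I2 T2sq_def lab_def)
    then show "\<exists>q. ((s, a, s1), s1, b, q) \<in> Ind T2 \<and> ((s, b, s2), s2, a, q) \<in> Ind T2" by blast
  qed
  show "\<forall>s a s1 b q. ((s, a, s1), s1, b, q) \<in> Ind T2 \<longrightarrow>
        (\<exists>s2. ((s, a, s1), s, b, s2) \<in> Ind T2 \<and> ((s, b, s2), s2, a, q) \<in> Ind T2)"
  proof (intro allI impI)
    fix s a s1 b q assume "((s, a, s1), s1, b, q) \<in> Ind T2"
    then have h: "T2sq (s,a,s1) = T2sq (s1,b,q)" "T2sq (s,a,s1) \<noteq> 0" "a \<noteq> b" by (auto simp: I2 lab_def)
    have "(s,a,s1) \<in> {(0,0,1),(0,1,3),(1,1,5),(3,0,5),(0,0,2),(0,1,4),(2,1,5),(4,0,5)}"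
        "(s1,b,q) \<in> {(0,0,1),(0,1,3),(1,1,5),(3,0,5),(0,0,2),(0,1,4),(2,1,5),(4,0,5)}"
      using dom2[of "(s,a,s1)"] dom2[of "(s1,b,q)"] h by metis+
    then have "((s, a, s1), s, b, W2 s1) \<in> Ind T2 \<and> ((s, b, W2 s1), W2 s1, a, q) \<in> Ind T2"
      using h by (elim insertE emptyE) (simp_all add: I2 T2sq_def lab_def W2_def)
    then show "\<exists>s2. ((s, a, s1), s, b, s2) \<in> Ind T2 \<and> ((s, b, s2), s2, a, q) \<in> Ind T2" by blast
  qed
  show "\<forall>t t'. (t, t') \<in> simT T2 \<longrightarrow> {u. (t, u) \<in> Ind T2} = {u. (t', u) \<in> Ind T2}"
    by (rule A4_gen[OF I])
  show "\<forall>s. finite {t \<in> Tr T2. src t = s}" by (simp add: T2_def)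
qed

definition T3sq :: "(nat,nat) trans \<Rightarrow> nat" where
  "T3sq t = (if t \<in> {(0,0,1),(0,1,2),(1,1,3),(2,0,3)} then 1 else 0)"

definition T3 :: "(nat,nat) tsi" where
  "T3 = \<lparr> St = {0..5}, init = 0, Lab = {0,1,2},
         Tr = {(0,0,1),(0,1,2),(1,1,3),(1,1,4),(2,0,3),(2,0,4),(3,2,5)},
         Ind = sqInd T3sq \<rparr>"

lemma dom3: "T3sq t \<noteq> 0 \<Longrightarrow> t \<in> {(0,0,1),(0,1,2),(1,1,3),(2,0,3)}"
  unfolding T3sq_def by (auto split: if_splits)

lemma S8Tr3: "t \<in> {(0,0,1),(0,1,2),(1,1,3),(2,0,3)} \<Longrightarrow> t \<in> Tr T3"
  unfolding T3_def by (elim insertE emptyE) simp_all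

lemma I3: "(t,u) \<in> Ind T3 \<longleftrightarrow> T3sq t = T3sq u \<and> T3sq t \<noteq> 0 \<and> lab t \<noteq> lab u"
  by (simp add: T3_def sqInd_def)

definition W3 :: "nat \<Rightarrow> nat" where "W3 s1 = (if s1 = 1 then 2 else 1)"

lemma tsi_T3: "is_tsi T3"
  unfolding is_tsi_def
proof (intro conjI)
  have I: "Ind T3 = sqInd T3sq" by (simp add: T3_def)
  show "init T3 \<in> St T3" by (simp add: T3_def)
  show "Tr T3 \<subseteq> St T3 \<times> Lab T3 \<times> St T3" by (simp add: T3_def)
  show "Ind T3 \<subseteq> Tr T3 \<times> Tr T3"
  proof
    fix p assume "p \<in> Ind T3"
    then obtain t u where p: "p = (t,u)" "T3sq t \<noteq> 0" "T3sq u \<noteq> 0" by (cases p) (auto simp: I3)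
    then show "p \<in> Tr T3 \<times> Tr T3" using S8Tr3[OF dom3[of t]] S8Tr3[OF dom3[of u]] by simp
  qed
  show "irrefl (Ind T3)" by (simp add: I3 irrefl_def)
  show "sym (Ind T3)" by (auto simp add: I3 sym_def)
  show "\<forall>s a s1 s2. ((s, a, s1), s, a, s2) \<in> simT T3 \<longrightarrow> s1 = s2"
  proof (intro allI impI)
    fix s a s1 s2 assume "((s, a, s1), s, a, s2) \<in> simT T3"
    then have "s1 = s2 \<or> (T3sq (s,a,s1) = T3sq (s,a,s2) \<and> T3sq (s,a,s1) \<noteq> 0)"
      using simT_sub[OF I] by auto
    then show "s1 = s2"
    proof
      assume h: "T3sq (s,a,s1) = T3sq (s,a,s2) \<and> T3sq (s,a,s1) \<noteq> 0"
      have "(s,a,s1) \<in> {(0,0,1),(0,1,2),(1,1,3),(2,0,3)}"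
        "(s,a,s2) \<in> {(0,0,1),(0,1,2),(1,1,3),(2,0,3)}"
        using dom3[of "(s,a,s1)"] dom3[of "(s,a,s2)"] h by metis+
      then show ?thesis using h by (elim insertE emptyE) (simp_all add: T3sq_def)
    qed
  qed
  show "\<forall>s a s1 b s2. ((s, a, s1), s, b, s2) \<in> Ind T3 \<longrightarrow>
        (\<exists>q. ((s, a, s1), s1, b, q) \<in> Ind T3 \<and> ((s, b, s2), s2, a, q) \<in> Ind T3)"
  proof (intro allI impI)
    fix s a s1 b s2 assume "((s, a, s1), s, b, s2) \<in> Ind T3"
    then have h: "T3sq (s,a,s1) = T3sq (s,b,s2)" "T3sq (s,a,s1) \<noteq> 0" "a \<noteq> b" by (auto simp: I3 lab_def)
    have "(s,a,s1) \<in> {(0,0,1),(0,1,2),(1,1,3),(2,0,3)}"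
        "(s,b,s2) \<in> {(0,0,1),(0,1,2),(1,1,3),(2,0,3)}"
      using dom3[of "(s,a,s1)"] dom3[of "(s,b,s2)"] h by metis+
    then have "((s, a, s1), s1, b, 3) \<in> Ind T3 \<and> ((s, b, s2), s2, a, 3) \<in> Ind T3"
      using h by (elim insertE emptyE) (simp_all add: I3 T3sq_def lab_def)
    then show "\<exists>q. ((s, a, s1), s1, b, q) \<in> Ind T3 \<and> ((s, b, s2), s2, a, q) \<in> Ind T3" by blast
  qed
  show "\<forall>s a s1 b q. ((s, a, s1), s1, b, q) \<in> Ind T3 \<longrightarrow>
        (\<exists>s2. ((s, a, s1), s, b, s2) \<in> Ind T3 \<and> ((s, b, s2), s2, a, q) \<in> Ind T3)"
  proof (intro allI impI)
    fix s a s1 b q assume "((s, a, s1), s1, b, q) \<in> Ind T3"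
    then have h: "T3sq (s,a,s1) = T3sq (s1,b,q)" "T3sq (s,a,s1) \<noteq> 0" "a \<noteq> b" by (auto simp: I3 lab_def)
    have "(s,a,s1) \<in> {(0,0,1),(0,1,2),(1,1,3),(2,0,3)}"
        "(s1,b,q) \<in> {(0,0,1),(0,1,2),(1,1,3),(2,0,3)}"
      using dom3[of "(s,a,s1)"] dom3[of "(s1,b,q)"] h by metis+
    then have "((s, a, s1), s, b, W3 s1) \<in> Ind T3 \<and> ((s, b, W3 s1), W3 s1, a, q) \<in> Ind T3"
      using h by (elim insertE emptyE) (simp_all add: I3 T3sq_def lab_def W3_def)
    then show "\<exists>s2. ((s, a, s1), s, b, s2) \<in> Ind T3 \<and> ((s, b, s2), s2, a, q) \<in> Ind T3" by blast
  qed
  show "\<forall>t t'. (t, t') \<in> simT T3 \<longrightarrow> {u. (t, u) \<in> Ind T3} = {u. (t', u) \<in> Ind T3}"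
    by (rule A4_gen[OF I])
  show "\<forall>s. finite {t \<in> Tr T3. src t = s}" by (simp add: T3_def)
qed

definition T4sq :: "(nat,nat) trans \<Rightarrow> nat" where
  "T4sq t = (if t \<in> {(0,0,1),(0,1,2),(1,1,4),(2,0,4)} then 1 else 0)"

definition T4 :: "(nat,nat) tsi" where
  "T4 = \<lparr> St = {0..5}, init = 0, Lab = {0,1,2},
         Tr = {(0,0,1),(0,1,2),(1,1,3),(1,1,4),(2,0,3),(2,0,4),(3,2,5)},
         Ind = sqInd T4sq \<rparr>"

lemma dom4: "T4sq t \<noteq> 0 \<Longrightarrow> t \<in> {(0,0,1),(0,1,2),(1,1,4),(2,0,4)}"
  unfolding T4sq_def by (auto split: if_splits)

lemma S8Tr4: "t \<in> {(0,0,1),(0,1,2),(1,1,4),(2,0,4)} \<Longrightarrow> t \<in> Tr T4"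
  unfolding T4_def by (elim insertE emptyE) simp_all

lemma I4: "(t,u) \<in> Ind T4 \<longleftrightarrow> T4sq t = T4sq u \<and> T4sq t \<noteq> 0 \<and> lab t \<noteq> lab u"
  by (simp add: T4_def sqInd_def)

definition W4 :: "nat \<Rightarrow> nat" where "W4 s1 = (if s1 = 1 then 2 else 1)"

lemma tsi_T4: "is_tsi T4"
  unfolding is_tsi_def
proof (intro conjI)
  have I: "Ind T4 = sqInd T4sq" by (simp add: T4_def)
  show "init T4 \<in> St T4" by (simp add: T4_def)
  show "Tr T4 \<subseteq> St T4 \<times> Lab T4 \<times> St T4" by (simp add: T4_def)
  show "Ind T4 \<subseteq> Tr T4 \<times> Tr T4"
  proof
    fix p assume "p \<in> Ind T4"
    then obtain t u where p: "p = (t,u)" "T4sq t \<noteq> 0" "T4sq u \<noteq> 0" by (cases p) (auto simp: I4)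
    then show "p \<in> Tr T4 \<times> Tr T4" using S8Tr4[OF dom4[of t]] S8Tr4[OF dom4[of u]] by simp
  qed
  show "irrefl (Ind T4)" by (simp add: I4 irrefl_def)
  show "sym (Ind T4)" by (auto simp add: I4 sym_def)
  show "\<forall>s a s1 s2. ((s, a, s1), s, a, s2) \<in> simT T4 \<longrightarrow> s1 = s2"
  proof (intro allI impI)
    fix s a s1 s2 assume "((s, a, s1), s, a, s2) \<in> simT T4"
    then have "s1 = s2 \<or> (T4sq (s,a,s1) = T4sq (s,a,s2) \<and> T4sq (s,a,s1) \<noteq> 0)"
      using simT_sub[OF I] by auto
    then show "s1 = s2"
    proof
      assume h: "T4sq (s,a,s1) = T4sq (s,a,s2) \<and> T4sq (s,a,s1) \<noteq> 0"
      have "(s,a,s1) \<in> {(0,0,1),(0,1,2),(1,1,4),(2,0,4)}"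
        "(s,a,s2) \<in> {(0,0,1),(0,1,2),(1,1,4),(2,0,4)}"
        using dom4[of "(s,a,s1)"] dom4[of "(s,a,s2)"] h by metis+
      then show ?thesis using h by (elim insertE emptyE) (simp_all add: T4sq_def)
    qed
  qed
  show "\<forall>s a s1 b s2. ((s, a, s1), s, b, s2) \<in> Ind T4 \<longrightarrow>
        (\<exists>q. ((s, a, s1), s1, b, q) \<in> Ind T4 \<and> ((s, b, s2), s2, a, q) \<in> Ind T4)"
  proof (intro allI impI)
    fix s a s1 b s2 assume "((s, a, s1), s, b, s2) \<in> Ind T4"
    then have h: "T4sq (s,a,s1) = T4sq (s,b,s2)" "T4sq (s,a,s1) \<noteq> 0" "a \<noteq> b" by (auto simp: I4 lab_def)
    have "(s,a,s1) \<in> {(0,0,1),(0,1,2),(1,1,4),(2,0,4)}"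
        "(s,b,s2) \<in> {(0,0,1),(0,1,2),(1,1,4),(2,0,4)}"
      using dom4[of "(s,a,s1)"] dom4[of "(s,b,s2)"] h by metis+
    then have "((s, a, s1), s1, b, 4) \<in> Ind T4 \<and> ((s, b, s2), s2, a, 4) \<in> Ind T4"
      using h by (elim insertE emptyE) (simp_all add: I4 T4sq_def lab_def)
    then show "\<exists>q. ((s, a, s1), s1, b, q) \<in> Ind T4 \<and> ((s, b, s2), s2, a, q) \<in> Ind T4" by blast
  qed
  show "\<forall>s a s1 b q. ((s, a, s1), s1, b, q) \<in> Ind T4 \<longrightarrow>
        (\<exists>s2. ((s, a, s1), s, b, s2) \<in> Ind T4 \<and> ((s, b, s2), s2, a, q) \<in> Ind T4)"
  proof (intro allI impI)
    fix s a s1 b q assume "((s, a, s1), s1, b, q) \<in> Ind T4"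
    then have h: "T4sq (s,a,s1) = T4sq (s1,b,q)" "T4sq (s,a,s1) \<noteq> 0" "a \<noteq> b" by (auto simp: I4 lab_def)
    have "(s,a,s1) \<in> {(0,0,1),(0,1,2),(1,1,4),(2,0,4)}"
        "(s1,b,q) \<in> {(0,0,1),(0,1,2),(1,1,4),(2,0,4)}"
      using dom4[of "(s,a,s1)"] dom4[of "(s1,b,q)"] h by metis+
    then have "((s, a, s1), s, b, W4 s1) \<in> Ind T4 \<and> ((s, b, W4 s1), W4 s1, a, q) \<in> Ind T4"
      using h by (elim insertE emptyE) (simp_all add: I4 T4sq_def lab_def W4_def)
    then show "\<exists>s2. ((s, a, s1), s, b, s2) \<in> Ind T4 \<and> ((s, b, s2), s2, a, q) \<in> Ind T4" by blast
  qed
  show "\<forall>t t'. (t, t') \<in> simT T4 \<longrightarrow> {u. (t, u) \<in> Ind T4} = {u. (t', u) \<in> Ind T4}"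
    by (rule A4_gen[OF I])
  show "\<forall>s. finite {t \<in> Tr T4. src t = s}" by (simp add: T4_def)
qed

lemma leom: "(leA T t r \<or> ominusA T t r) \<longleftrightarrow> ((t = None \<longrightarrow> src r = init T) \<and> (\<forall>t0. t = Some t0 \<longrightarrow> tgt t0 = src r))"
  by (cases t) (auto simp: leA_def ominusA_def leT_def ominus_def)

lemma iso_same:
  assumes "\<forall>i j. i < j \<longrightarrow> j < length \<pi> \<longrightarrow> ((\<pi>!i,\<pi>!j) \<in> Ind T1 \<longleftrightarrow> (\<pi>!i,\<pi>!j) \<in> Ind T2)"
  shows "lposet_iso T1 \<pi> T2 \<pi>"
proof -
  have "run_ord T1 \<pi> = run_ord T2 \<pi>"
    unfolding run_ord_def using assms by (metis (no_types, lifting))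
  then show ?thesis unfolding lposet_iso_def
    by (intro conjI refl exI[of _ id]) auto
qed

lemma iso1: "lposet_iso T1 [x] T2 [x]"
  by (rule iso_same) auto

lemma iso2: "((x,y) \<in> Ind T1 \<longleftrightarrow> (x,y) \<in> Ind T2) \<Longrightarrow> lposet_iso T1 [x,y] T2 [x,y]"
  by (rule iso_same) (auto simp: less_Suc_eq nth_Cons')

definition RS :: "(nat,nat) trans list set" where
  "RS = {[], [(0,0,1)], [(0,0,2)], [(0,1,3)], [(0,1,4)],
         [(0,0,1),(1,1,5)], [(0,0,1),(1,3,5)], [(0,0,2),(2,1,5)],
         [(0,1,3),(3,0,5)], [(0,1,3),(3,2,5)], [(0,1,4),(4,0,5)]}"

lemma hpb12: "hpb T1 T2"
proof -
  have "\<pi>1 = \<pi>2 \<and> \<pi>1 \<in> RS \<Longrightarrow> eve_wins T1 T2 \<pi>1 \<pi>2" for \<pi>1 \<pi>2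
  proof (coinduction arbitrary: \<pi>1 \<pi>2 rule: eve_wins.coinduct)
    case (eve_wins \<pi>1 \<pi>2)
    then have e: "\<pi>2 = \<pi>1" "\<pi>1 \<in> RS" by auto
    have tr: "Tr T2 = Tr T1" by (simp add: T1_def T2_def)
    have es: "end_state T2 \<pi> = end_state T1 \<pi>" for \<pi> by (simp add: end_state_def T1_def T2_def)
    have key: "\<forall>u\<in>Tr T1. src u = end_state T1 \<pi>1 \<longrightarrow> synchronous T1 T2 \<pi>1 u \<pi>1 u \<and> \<pi>1 @ [u] \<in> RS"
    proof (intro ballI impI)
      fix u assume u: "u \<in> Tr T1" "src u = end_state T1 \<pi>1"
      have i0: "init T1 = 0" by (simp add: T1_def)
      from u(1) have "u \<in> {(0,0,1),(0,0,2),(0,1,3),(0,1,4),(1,1,5),(2,1,5),(3,0,5),(4,0,5),(1,3,5),(3,2,5)}" by (simp add: T1_def)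
      then show "synchronous T1 T2 \<pi>1 u \<pi>1 u \<and> \<pi>1 @ [u] \<in> RS"
        using e(2) u(2) unfolding RS_def
        by (elim insertE emptyE) (simp_all add: i0 I1 I2 T1sq_def T2sq_def lab_def src_def tgt_def end_state_def
             synchronous_def last_indep_def iso1 iso2)
    qed
    show ?case using key unfolding e(1) tr es by blast
  qed
  then show ?thesis unfolding hpb_def by (simp add: RS_def)
qed

definition phi :: "nat form" where
  "phi = DiaOt (Conj (Dia 0 (Dia 3 TT)) (Conj (Dia 1 (Dia 2 TT)) (Neg (Dia 0 (Neg (Dia 3 TT))))))"

lemma XsT1: "Xs T1 0 = {(0,0,1),(0,0,2),(0,1,3),(0,1,4)}" "Xs T1 1 = {(1,1,5),(1,3,5)}"
  "Xs T1 (Suc 0) = {(1,1,5),(1,3,5)}" "Xs T1 2 = {(2,1,5)}" "Xs T1 3 = {(3,0,5),(3,2,5)}" "Xs T1 4 = {(4,0,5)}" "Xs T1 5 = {}"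
  by (auto simp: Xs_def src_def T1_def)
lemma XsT2: "Xs T2 0 = {(0,0,1),(0,0,2),(0,1,3),(0,1,4)}" "Xs T2 1 = {(1,1,5),(1,3,5)}"
  "Xs T2 (Suc 0) = {(1,1,5),(1,3,5)}" "Xs T2 2 = {(2,1,5)}" "Xs T2 3 = {(3,0,5),(3,2,5)}" "Xs T2 4 = {(4,0,5)}" "Xs T2 5 = {}"
  by (auto simp: Xs_def src_def T2_def)
lemma TrT1: "Tr T1 = {(0,0,1),(0,0,2),(0,1,3),(0,1,4),(1,1,5),(2,1,5),(3,0,5),(4,0,5),(1,3,5),(3,2,5)}" by (simp add: T1_def)
lemma init12: "init T1 = 0" "init T2 = 0" "St T1 = {0..5}" "St T2 = {0..5}" by (simp_all add: T1_def T2_def)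

lemma sat1: "sat T1 (Xs T1 (init T1)) None phi"
proof -
  let ?M = "{(0,0,1),(0,1,3)} :: (nat,nat) trans set"
  have sq: "sqsub T1 ?M (Xs T1 0)"
    unfolding sqsub_def XsT1 by (simp add: otimes_def I1 T1sq_def lab_def src_def)
  have "conflict_free T1 ?M"
    unfolding conflict_free_def by (simp add: TrT1 otimes_def I1 T1sq_def lab_def src_def)
  then have "support T1 ?M" by (simp add: support_def)
  then have mx: "?M \<in> Xcal T1" using sq unfolding Xcal_def init12 by auto
  have st: "sat T1 ?M None (Conj (Dia 0 (Dia 3 TT)) (Conj (Dia 1 (Dia 2 TT)) (Neg (Dia 0 (Neg (Dia 3 TT))))))"
    by (simp add: leom XsT1 init12 src_def tgt_def lab_def)
  show ?thesis unfolding phi_def init12 sat.simps(5) using mx sq st by blast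
qed

lemma sat2: "\<not> sat T2 (Xs T2 (init T2)) None phi"
proof
  assume "sat T2 (Xs T2 (init T2)) None phi"
  then obtain M where M: "M \<in> Xcal T2" "sqsub T2 M (Xs T2 0)"
    and s: "sat T2 M None (Conj (Dia 0 (Dia 3 TT)) (Conj (Dia 1 (Dia 2 TT)) (Neg (Dia 0 (Neg (Dia 3 TT))))))"
    unfolding phi_def init12 by auto
  have sub: "M \<subseteq> {(0,0,1),(0,0,2),(0,1,3),(0,1,4)}"
    using M(2) unfolding sqsub_def XsT2 by blast
  from s obtain r r' where r: "r \<in> M" "lab r = 0" "r' \<in> Xs T2 (tgt r)" "lab r' = 3" by auto
  from r(1) sub have "r \<in> {(0,0,1),(0,0,2),(0,1,3),(0,1,4)}" by blast
  then have a1: "(0,0,1) \<in> M" using r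
    by (elim insertE emptyE) (simp_all add: XsT2 lab_def tgt_def)
  from s obtain p p' where p: "p \<in> M" "lab p = 1" "p' \<in> Xs T2 (tgt p)" "lab p' = 2" by auto
  from p(1) sub have "p \<in> {(0,0,1),(0,0,2),(0,1,3),(0,1,4)}" by blast
  then have b1: "(0,1,3) \<in> M" using p
    by (elim insertE emptyE) (simp_all add: XsT2 lab_def tgt_def)
  have a2: "(0,0,2) \<notin> M"
  proof
    assume a2in: "(0,0,2) \<in> M"
    have "\<not> (lab ((0,0,2)::(nat,nat) trans) = (0::nat) \<and> (leA T2 None (0,0,2) \<or> ominusA T2 None (0,0,2)) \<and>
       \<not> sat T2 (Xs T2 (tgt ((0,0,2)::(nat,nat) trans))) (Some (0,0,2)) (Dia 3 TT))" using s a2in by auto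
    then show False by (simp add: leom XsT2 init12 src_def tgt_def lab_def)
  qed
  have "\<not> (\<exists>s. M = Xs T2 s)"
  proof
    assume "\<exists>s. M = Xs T2 s"
    then obtain s where "M = Xs T2 s" by blast
    then show False using a1 a2 by (simp add: Xs_def src_def T2_def)
  qed
  moreover have "\<not> conflict_free T2 M"
  proof
    assume "conflict_free T2 M"
    then have "\<forall>t\<in>M. \<forall>t'\<in>M. t \<noteq> t' \<longrightarrow> otimes T2 t t'" unfolding conflict_free_def by blast
    moreover have "((0,0,1)::(nat,nat) trans) \<noteq> (0,1,3)" by simp
    ultimately have "otimes T2 (0,0,1) (0,1,3)" using a1 b1 by blast
    then show False by (simp add: otimes_def I2 T2sq_def)
  qed
  ultimately show False using M(1) by (auto simp: Xcal_def support_def)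
qed

lemma ntmu12: "\<not> tmu_equiv T1 T2"
  unfolding tmu_equiv_def using sat1 sat2 by blast

lemma TrT34: "Tr T3 = {(0,0,1),(0,1,2),(1,1,3),(1,1,4),(2,0,3),(2,0,4),(3,2,5)}"
  "Tr T4 = {(0,0,1),(0,1,2),(1,1,3),(1,1,4),(2,0,3),(2,0,4),(3,2,5)}"
  "init T3 = 0" "init T4 = 0" "St T3 = {0..5}" "St T4 = {0..5}"
  by (simp_all add: T3_def T4_def)

lemma ot34a: "src t = src u \<Longrightarrow> (t,u) \<in> Ind T3 \<Longrightarrow> (t,u) \<in> Ind T4"
proof -
  assume s: "src t = src u" and i: "(t,u) \<in> Ind T3"
  then have "T3sq t \<noteq> 0" "T3sq u \<noteq> 0" by (auto simp: I3)
  then have "t \<in> {(0,0,1),(0,1,2),(1,1,3),(2,0,3)}" "u \<in> {(0,0,1),(0,1,2),(1,1,3),(2,0,3)}"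
    using dom3 by blast+
  then show ?thesis using s i
    by (elim insertE emptyE) (simp_all add: I3 I4 T3sq_def T4sq_def src_def lab_def)
qed

lemma ot34b: "src t = src u \<Longrightarrow> (t,u) \<in> Ind T4 \<Longrightarrow> (t,u) \<in> Ind T3"
proof -
  assume s: "src t = src u" and i: "(t,u) \<in> Ind T4"
  then have "T4sq t \<noteq> 0" "T4sq u \<noteq> 0" by (auto simp: I4)
  then have "t \<in> {(0,0,1),(0,1,2),(1,1,4),(2,0,4)}" "u \<in> {(0,0,1),(0,1,2),(1,1,4),(2,0,4)}"
    using dom4 by blast+
  then show ?thesis using s i
    by (elim insertE emptyE) (simp_all add: I3 I4 T3sq_def T4sq_def src_def lab_def)
qed

lemma otimes34: "otimes T3 = otimes T4"
  unfolding fun_eq_iff otimes_def using ot34a ot34b by blast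

lemma Xs34: "Xs T3 = Xs T4" by (simp add: fun_eq_iff Xs_def TrT34)

lemma Xcal34: "Xcal T3 = Xcal T4"
  unfolding Xcal_def support_def conflict_free_def sqsub_def otimes34 Xs34
  by (simp add: TrT34)

lemma sqsub34: "sqsub T3 = sqsub T4"
  unfolding sqsub_def otimes34 by simp

lemma sat34: "sat T3 R t \<phi> \<longleftrightarrow> sat T4 R t \<phi>"
proof (induction \<phi> arbitrary: R t)
  case (Dia a \<phi>)
  show ?case by (simp add: leom Dia Xs34 TrT34)
next
  case (DiaOt \<phi>)
  show ?case by (simp add: Xcal34 sqsub34 DiaOt)
qed auto

lemma tmu34: "tmu_equiv T3 T4"
  unfolding tmu_equiv_def using sat34 by (simp add: Xs34 TrT34)

lemma ew_first: "eve_wins A B \<pi>1 \<pi>2 \<Longrightarrow> u \<in> Tr A \<Longrightarrow> src u = end_state A \<pi>1 \<Longrightarrow>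
   \<exists>v\<in>Tr B. src v = end_state B \<pi>2 \<and> lab v = lab u \<and> synchronous A B \<pi>1 u \<pi>2 v \<and>
     eve_wins A B (\<pi>1 @ [u]) (\<pi>2 @ [v])"
  by (erule eve_wins.cases) blast

lemma nhpb34: "\<not> hpb T3 T4"
proof
  assume "hpb T3 T4"
  then have w0: "eve_wins T3 T4 [] []" by (simp add: hpb_def)
  have m0: "(0,0,1) \<in> Tr T3" "src ((0,0,1)::(nat,nat) trans) = end_state T3 []"
    by (simp_all add: TrT34 src_def end_state_def)
  from ew_first[OF w0 m0] obtain v where v: "v \<in> Tr T4" "src v = end_state T4 []"
    "lab v = lab ((0,0,1)::(nat,nat) trans)" "eve_wins T3 T4 [(0,0,1)] [v]"
    by (metis append_Nil)
  from v(1) have "v \<in> {(0,0,1),(0,1,2),(1,1,3),(1,1,4),(2,0,3),(2,0,4),(3,2,5)}" by (simp add: TrT34)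
  then have w1: "eve_wins T3 T4 [(0,0,1)] [(0,0,1)]" using v(2-4)
    by (elim insertE emptyE) (simp_all add: src_def lab_def end_state_def TrT34)
  have m1: "(1,1,3) \<in> Tr T3" "src ((1,1,3)::(nat,nat) trans) = end_state T3 [(0,0,1)]"
    by (simp_all add: TrT34 src_def tgt_def end_state_def)
  from ew_first[OF w1 m1] obtain v where v: "v \<in> Tr T4" "src v = end_state T4 [(0,0,1)]"
    "lab v = lab ((1,1,3)::(nat,nat) trans)" "synchronous T3 T4 [(0,0,1)] (1,1,3) [(0,0,1)] v"
    "eve_wins T3 T4 [(0,0,1),(1,1,3)] [(0,0,1),v]"
    by (metis append_Cons append_Nil)
  from v(1) have "v \<in> {(0,0,1),(0,1,2),(1,1,3),(1,1,4),(2,0,3),(2,0,4),(3,2,5)}" by (simp add: TrT34)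
  then have w2: "eve_wins T3 T4 [(0,0,1),(1,1,3)] [(0,0,1),(1,1,4)]" using v(2-5)
    by (elim insertE emptyE) (simp_all add: src_def lab_def tgt_def end_state_def synchronous_def last_indep_def I3 I4 T3sq_def T4sq_def)
  have m2: "(3,2,5) \<in> Tr T3" "src ((3,2,5)::(nat,nat) trans) = end_state T3 [(0,0,1),(1,1,3)]"
    by (simp_all add: TrT34 src_def tgt_def end_state_def)
  from ew_first[OF w2 m2] obtain v where v: "v \<in> Tr T4" "src v = end_state T4 [(0,0,1),(1,1,4)]" by blast
  from v(1) have "v \<in> {(0,0,1),(0,1,2),(1,1,3),(1,1,4),(2,0,3),(2,0,4),(3,2,5)}" by (simp add: TrT34)
  then show False using v(2)
    by (elim insertE emptyE) (simp_all add: src_def tgt_def end_state_def)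
qed


theorem proposition3:
  shows "(\<exists>(T1 :: (nat, nat) tsi) (T2 :: (nat, nat) tsi). is_tsi T1 \<and> is_tsi T2 \<and> hpb T1 T2 \<and> \<not> tmu_equiv T1 T2) \<and>
         (\<exists>(T3 :: (nat, nat) tsi) (T4 :: (nat, nat) tsi). is_tsi T3 \<and> is_tsi T4 \<and> tmu_equiv T3 T4 \<and> \<not> hpb T3 T4)"
  using tsi_T1 tsi_T2 hpb12 ntmu12 tsi_T3 tsi_T4 tmu34 nhpb34 by blast

end
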